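(* Let $n\ge 3$, let $F$ be a set of edges of $Q_n$, and let $B$ be a set of edges of $Q_n$ not in $F$ such that every Hamiltonian cycle of $Q_n-F$ contains every edge of $B$. Fix a dimension $i$, and let $f_i^e$ (resp. $f_i^o$) be the number of even (resp. odd) crossing edges of dimension $i$ that lie in $F$, and $b_i^e$ (resp. $b_i^o$) the number of even (resp. odd) crossing edges of dimension $i$ that lie in $B$. Then: (1) if $f_i^e=2^{n-2}$ or $f_i^o=2^{n-2}$, then $Q_n-F$ has no Hamiltonian cycle; (2) if $f_i^e+b_i^o>2^{n-2}$ or $f_i^o+b_i^e>2^{n-2}$, then $Q_n-F$ has no Hamiltonian cycle; (3) if $f_i^e+b_i^o=2^{n-2}$, then every Hamiltonian cycle of $Q_n-F$ contains every even crossing edge of dimension $i$ not in $F$, and every odd crossing edge of dimension $i$ contained in a Hamiltonian cycle of $Q_n-F$ belongs to $B$; (4) if $f_i^o+b_i^e=2^{n-2}$, then every Hamiltonian cycle of $Q_n-F$ contains every odd crossing edge of dimension $i$ not in $F$, and every even crossing edge of dimension $i$ contained in a Hamiltonian cycle of $Q_n-F$ belongs to $B$; (5) if $f_i^e=2^{n-2}-1$ (resp. $f_i^o=2^{n-2}-1$), then the unique even (resp. odd) crossing edge of dimension $i$ not in $F$ belongs to every Hamiltonian cycle of $Q_n-F$.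
   Context: $Q_n$ is the $n$-dimensional hypercube on the binary strings $x=x_{n-1}\dots x_0$, two strings adjacent iff they differ in exactly one bit; $x^{(i)}$ denotes $x$ with bit $i$ flipped. The parity of a vertex is the number of ones in its label modulo 2. $F$ is a set of "faulty" edges and $Q_n-F$ is the graph on all vertices of $Q_n$ with the edges of $Q_n$ not in $F$. For a dimension $i$, let $Q^L=\{x:x_i=0\}$; the crossing edges of dimension $i$ are the $2^{n-1}$ edges $(u,u^{(i)})$ with $u\in Q^L$; such an edge is even if $u$ has parity 0 and odd if $u$ has parity 1 (so there are $2^{n-2}$ even and $2^{n-2}$ odd crossing edges). *)

theory Defs
  imports Main
begin

text \<open>A binary string x = x_{n-1}...x_0 is represented by the set of positions
  carrying a one, a subset of {..<n}.\<close>

definition qverts :: "nat \<Rightarrow> nat set set" where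
  "qverts n = {x. x \<subseteq> {..<n}}"

definition flip :: "nat set \<Rightarrow> nat \<Rightarrow> nat set" where
  "flip x i = (if i \<in> x then x - {i} else insert i x)"

definition parity :: "nat set \<Rightarrow> nat" where
  "parity x = card x mod 2"

definition qedges :: "nat \<Rightarrow> nat set set set" where
  "qedges n = {{u, flip u i} | u i. u \<in> qverts n \<and> i < n}"

definition even_cross :: "nat \<Rightarrow> nat \<Rightarrow> nat set set set" where
  "even_cross n i = {{u, flip u i} | u. u \<in> qverts n \<and> i \<notin> u \<and> parity u = 0}"

definition odd_cross :: "nat \<Rightarrow> nat \<Rightarrow> nat set set set" where
  "odd_cross n i = {{u, flip u i} | u. u \<in> qverts n \<and> i \<notin> u \<and> parity u = 1}"

definition ham_cycle :: "'a set \<Rightarrow> 'a set set \<Rightarrow> 'a set set \<Rightarrow> bool" where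
  "ham_cycle V E C \<longleftrightarrow> (\<exists>vs. distinct vs \<and> set vs = V \<and> length vs \<ge> 3 \<and>
      C = {{vs ! k, vs ! ((k + 1) mod length vs)} | k. k < length vs} \<and> C \<subseteq> E)"

definition qham :: "nat \<Rightarrow> nat set set set \<Rightarrow> nat set set set \<Rightarrow> bool" where
  "qham n F C \<longleftrightarrow> ham_cycle (qverts n) (qedges n - F) C"

end

theory Submission
  imports Defs
begin


lemma altsum_Pow:
  assumes "finite A" "A \<noteq> {}"
  shows "(\<Sum>x\<in>Pow A. (-1::int)^card x) = 0"
proof -
  obtain a where aA: "a \<in> A" using assms(2) by blast
  define A0 where "A0 = A - {a}"
  have A: "A = insert a A0" and a: "a \<notin> A0" using aA unfolding A0_def by auto
  have f: "finite A0" using assms(1) A by simp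
  have disj: "Pow A0 \<inter> insert a ` Pow A0 = {}" using a by auto
  have inj: "inj_on (insert a) (Pow A0)" using a unfolding inj_on_def
    by (metis PowD insert_ident subsetD)
  have "(\<Sum>x\<in>Pow A. (-1::int)^card x) = (\<Sum>x\<in>Pow A0. (-1::int)^card x) + (\<Sum>x\<in>insert a ` Pow A0. (-1::int)^card x)"
    unfolding A Pow_insert using f disj by (simp add: sum.union_disjoint)
  also have "(\<Sum>x\<in>insert a ` Pow A0. (-1::int)^card x) = (\<Sum>x\<in>Pow A0. (-1::int)^card (insert a x))"
    using inj by (simp add: sum.reindex)
  also have "\<dots> = (\<Sum>x\<in>Pow A0. - ((-1::int)^card x))"
  proof (rule sum.cong)
    fix x assume "x \<in> Pow A0"
    then have "finite x" "a \<notin> x" using f a finite_subset by auto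
    then show "(-1::int)^card (insert a x) = - ((-1::int)^card x)" by simp
  qed simp
  finally show ?thesis by (simp add: sum_negf)
qed

lemma count_even_odd:
  assumes "finite A" "A \<noteq> {}"
  shows "card {x\<in>Pow A. even (card x)} = 2^(card A - 1)"
    and "card {x\<in>Pow A. odd (card x)} = 2^(card A - 1)"
proof -
  let ?E = "{x\<in>Pow A. even (card x)}" and ?O = "{x\<in>Pow A. odd (card x)}"
  have fin: "finite ?E" "finite ?O" using assms(1) by auto
  have un: "Pow A = ?E \<union> ?O" by auto
  have dj: "?E \<inter> ?O = {}" by auto
  have "card ?E + card ?O = card (?E \<union> ?O)" using card_Un_disjoint[OF fin dj] by simp
  also have "?E \<union> ?O = Pow A" by auto
  also have "card (Pow A) = 2 ^ card A" using assms(1) by (simp add: card_Pow)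
  finally have "card ?E + card ?O = 2 ^ card A" .
  moreover have "(\<Sum>x\<in>Pow A. (-1::int)^card x) = (\<Sum>x\<in>?E. (-1::int)^card x) + (\<Sum>x\<in>?O. (-1::int)^card x)"
  proof -
    have "(\<Sum>x\<in>Pow A. (-1::int)^card x) = (\<Sum>x\<in>?E \<union> ?O. (-1::int)^card x)"
      by (rule arg_cong[OF un])
    also have "\<dots> = (\<Sum>x\<in>?E. (-1::int)^card x) + (\<Sum>x\<in>?O. (-1::int)^card x)"
      by (rule sum.union_disjoint[OF fin dj])
    finally show ?thesis .
  qed
  moreover have "(\<Sum>x\<in>?E. (-1::int)^card x) = int (card ?E)"
  proof -
    have "(\<Sum>x\<in>?E. (-1::int)^card x) = (\<Sum>x\<in>?E. 1)" by (rule sum.cong) auto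
    then show ?thesis by simp
  qed
  moreover have "(\<Sum>x\<in>?O. (-1::int)^card x) = - int (card ?O)"
  proof -
    have "(\<Sum>x\<in>?O. (-1::int)^card x) = (\<Sum>x\<in>?O. -1)" by (rule sum.cong) auto
    then show ?thesis by simp
  qed
  ultimately have c1: "card ?E = card ?O" and c2: "card ?E + card ?O = 2 ^ card A"
    using altsum_Pow[OF assms] by linarith+
  have "card A \<ge> 1" using assms by (simp add: Suc_leI card_gt_0_iff)
  then have p: "(2::nat) ^ card A = 2 * 2^(card A - 1)" by (cases "card A") auto
  show "card ?E = 2^(card A - 1)" "card ?O = 2^(card A - 1)"
    using c1 c2 p by linarith+
qed



definition wt :: "nat \<Rightarrow> nat set \<Rightarrow> int" where
  "wt i v = (if i \<notin> v then (-1)^card v else 0)"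

lemma flip_notin: "i \<notin> u \<Longrightarrow> flip u i = insert i u" by (simp add: flip_def)

lemma ec_alt: "even_cross n i = (\<lambda>u. {u, insert i u}) ` {x\<in>Pow({..<n}-{i}). even (card x)}"
proof -
  have "even_cross n i = (\<lambda>u. {u, flip u i}) ` {u. u \<in> qverts n \<and> i \<notin> u \<and> parity u = 0}"
    unfolding even_cross_def by (rule setcompr_eq_image)
  also have "{u. u \<in> qverts n \<and> i \<notin> u \<and> parity u = 0} = {x\<in>Pow({..<n}-{i}). even (card x)}"
    unfolding qverts_def parity_def by (auto simp: odd_iff_mod_2_eq_one)
  also have "(\<lambda>u. {u, flip u i}) ` {x\<in>Pow({..<n}-{i}). even (card x)} = (\<lambda>u. {u, insert i u}) ` {x\<in>Pow({..<n}-{i}). even (card x)}"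
  proof (rule image_cong[OF refl])
    fix x assume "x \<in> {x\<in>Pow({..<n}-{i}). even (card x)}"
    then have "i \<notin> x" by auto
    then show "{x, flip x i} = {x, insert i x}" by (simp add: flip_notin)
  qed
  finally show ?thesis .
qed

lemma oc_alt: "odd_cross n i = (\<lambda>u. {u, insert i u}) ` {x\<in>Pow({..<n}-{i}). odd (card x)}"
proof -
  have "odd_cross n i = (\<lambda>u. {u, flip u i}) ` {u. u \<in> qverts n \<and> i \<notin> u \<and> parity u = 1}"
    unfolding odd_cross_def by (rule setcompr_eq_image)
  also have "{u. u \<in> qverts n \<and> i \<notin> u \<and> parity u = 1} = {x\<in>Pow({..<n}-{i}). odd (card x)}"
    unfolding qverts_def parity_def by (auto simp: odd_iff_mod_2_eq_one)
  also have "(\<lambda>u. {u, flip u i}) ` {x\<in>Pow({..<n}-{i}). odd (card x)} = (\<lambda>u. {u, insert i u}) ` {x\<in>Pow({..<n}-{i}). odd (card x)}"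
  proof (rule image_cong[OF refl])
    fix x assume "x \<in> {x\<in>Pow({..<n}-{i}). odd (card x)}"
    then have "i \<notin> x" by auto
    then show "{x, flip x i} = {x, insert i x}" by (simp add: flip_notin)
  qed
  finally show ?thesis .
qed

lemma inj_pair: "inj_on (\<lambda>u. {u, insert i u}) {x. i \<notin> x}"
  unfolding inj_on_def by (metis doubleton_eq_iff insertI1 mem_Collect_eq)

lemma card_ec: assumes "2 \<le> n" "i < n" shows "card (even_cross n i) = 2^(n-2)" "finite (even_cross n i)"
proof -
  have inj: "inj_on (\<lambda>u. {u, insert i u}) {x\<in>Pow({..<n}-{i}). even (card x)}"
    by (rule inj_on_subset[OF inj_pair]) auto
  have "(if i = 0 then 1 else 0) \<in> {..<n}-{i}" using assms by auto
  then have ne: "{..<n}-{i} \<noteq> {}" by blast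
  have c: "card ({..<n}-{i}) = n - 1" using assms by simp
  show "card (even_cross n i) = 2^(n-2)" unfolding ec_alt using card_image[OF inj] count_even_odd(1)[OF _ ne] c
    by (simp add: diff_diff_left)
  show "finite (even_cross n i)" unfolding ec_alt by simp
qed

lemma card_oc: assumes "2 \<le> n" "i < n" shows "card (odd_cross n i) = 2^(n-2)" "finite (odd_cross n i)"
proof -
  have inj: "inj_on (\<lambda>u. {u, insert i u}) {x\<in>Pow({..<n}-{i}). odd (card x)}"
    by (rule inj_on_subset[OF inj_pair]) auto
  have "(if i = 0 then 1 else 0) \<in> {..<n}-{i}" using assms by auto
  then have ne: "{..<n}-{i} \<noteq> {}" by blast
  have c: "card ({..<n}-{i}) = n - 1" using assms by simp
  show "card (odd_cross n i) = 2^(n-2)" unfolding oc_alt using card_image[OF inj] count_even_odd(2)[OF _ ne] c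
    by (simp add: diff_diff_left)
  show "finite (odd_cross n i)" unfolding oc_alt by simp
qed

lemma cross_split: "e \<in> even_cross n i \<union> odd_cross n i \<Longrightarrow> \<exists>u. e = {u, insert i u} \<and> i \<notin> u"
  unfolding ec_alt oc_alt by auto

lemma h_edge:
  assumes e: "e \<in> qedges n" and i: "i < n"
  shows "(\<Sum>v\<in>e. wt i v) = of_bool (e \<in> even_cross n i) - of_bool (e \<in> odd_cross n i)"
proof -
  obtain u j where e: "e = {u, flip u j}" and u: "u \<subseteq> {..<n}" and j: "j < n"
    using e unfolding qedges_def qverts_def by auto
  have fu: "finite u" using u finite_subset by auto
  show ?thesis
  proof (cases "j = i")
    case False
    have iff: "(i \<in> flip u j) = (i \<in> u)" using False by (simp add: flip_def)
    have "(j \<in> flip u j) = (j \<notin> u)" by (simp add: flip_def)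
    then have ne: "u \<noteq> flip u j" by metis
    have nc: "e \<notin> even_cross n i \<union> odd_cross n i"
    proof
      assume "e \<in> even_cross n i \<union> odd_cross n i"
      then have "\<exists>x. e = {x, insert i x} \<and> i \<notin> x" by (rule cross_split)
      then obtain x where exx: "e = {x, insert i x} \<and> i \<notin> x" by (rule exE)
      then have ex: "e = {x, insert i x}" and x: "i \<notin> x" by simp_all
      have "x \<in> e" "insert i x \<in> e" using ex by auto
      then have m1: "x = u \<or> x = flip u j" and m2: "insert i x = u \<or> insert i x = flip u j" using e by auto
      from m1 have "i \<notin> u" using x iff by auto
      moreover from m2 have "i \<in> u" using iff by auto
      ultimately show False by simp
    qed
    have cc: "card u = Suc (card (flip u j)) \<or> card (flip u j) = Suc (card u)"
    proof (cases "j \<in> u")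
      case True
      then have "flip u j = u - {j}" by (simp add: flip_def)
      then show ?thesis using card_Suc_Diff1[OF fu True] by simp
    next
      case False
      then have "flip u j = insert j u" by (simp add: flip_def)
      then show ?thesis using fu False by simp
    qed
    have "wt i u + wt i (flip u j) = 0"
    proof (cases "i \<in> u")
      case True
      then show ?thesis using iff unfolding wt_def by simp
    next
      case False
      then have w: "wt i u + wt i (flip u j) = (-1)^card u + (-1)^card (flip u j)" using iff unfolding wt_def by simp
      from cc show ?thesis
      proof
        assume "card u = Suc (card (flip u j))" then show ?thesis using w by simp
      next
        assume "card (flip u j) = Suc (card u)" then show ?thesis using w by simp
      qed
    qed
    then show ?thesis using nc ne e by auto
  next
    case True
    obtain x where ex: "e = {x, insert i x}" and x: "i \<notin> x" "x \<subseteq> {..<n}-{i}"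
    proof (cases "i \<in> u")
      case T: True
      show ?thesis by (rule that[of "u - {i}"]) (use e True T u in \<open>auto simp: flip_def\<close>)
    next
      case F: False
      show ?thesis by (rule that[of u]) (use e True F u in \<open>auto simp: flip_def\<close>)
    qed
    have mem_e: "e \<in> even_cross n i \<longleftrightarrow> even (card x)"
    proof
      assume "e \<in> even_cross n i"
      then obtain y where "e = {y, insert i y}" "i \<notin> y" "even (card y)" unfolding ec_alt by auto
      then have "y = x" using ex x inj_pair unfolding inj_on_def by blast
      then show "even (card x)" using \<open>even (card y)\<close> by simp
    qed (use ex x in \<open>auto simp: ec_alt\<close>)
    have mem_o: "e \<in> odd_cross n i \<longleftrightarrow> odd (card x)"
    proof
      assume "e \<in> odd_cross n i"
      then obtain y where "e = {y, insert i y}" "i \<notin> y" "odd (card y)" unfolding oc_alt by auto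
      then have "y = x" using ex x inj_pair unfolding inj_on_def by blast
      then show "odd (card x)" using \<open>odd (card y)\<close> by simp
    qed (use ex x in \<open>auto simp: oc_alt\<close>)
    have "x \<noteq> insert i x" using x by auto
    then have "(\<Sum>v\<in>e. wt i v) = wt i x" using ex x by (simp add: wt_def)
    then show ?thesis using mem_e mem_o x unfolding wt_def by auto
  qed
qed

lemma cross_edge:
  assumes e: "e \<in> qedges n" and "a \<in> e" "b \<in> e" "i \<in> a" "i \<notin> b"
  shows "e \<in> even_cross n i \<union> odd_cross n i"
proof -
  obtain u j where e: "e = {u, flip u j}" and u: "u \<subseteq> {..<n}" and j: "j < n"
    using e unfolding qedges_def qverts_def by auto
  have True: "j = i" using assms e by (auto simp: flip_def split: if_splits)
  obtain x where ex: "e = {x, insert i x}" and x: "i \<notin> x" "x \<subseteq> {..<n}-{i}"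
  proof (cases "i \<in> u")
    case T: True
    show ?thesis by (rule that[of "u - {i}"]) (use e True T u in \<open>auto simp: flip_def\<close>)
  next
    case F: False
    show ?thesis by (rule that[of u]) (use e True F u in \<open>auto simp: flip_def\<close>)
  qed
  show ?thesis
  proof (cases "even (card x)")
    case True
    then show ?thesis unfolding ec_alt using ex x by auto
  next
    case False
    then show ?thesis unfolding oc_alt using ex x by auto
  qed
qed

lemma mod_succ: "(k::nat) < m \<Longrightarrow> (k+1) mod m = (if k+1 = m then 0 else k+1)"
proof (cases "k+1 = m")
  case False
  assume "k < m"
  then have "k+1 < m" using False by linarith
  then show ?thesis using False by simp
qed simp

lemma sum_qverts: assumes "2 \<le> n" "i < n" shows "(\<Sum>v\<in>qverts n. wt i v) = 0"
proof -
  have "(if i = 0 then 1 else 0) \<in> {..<n}-{i}" using assms by auto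
  then have ne: "{..<n}-{i} \<noteq> {}" by blast
  have "(\<Sum>v\<in>qverts n. wt i v) = (\<Sum>v\<in>Pow({..<n}-{i}). wt i v)"
    unfolding qverts_def
    by (rule sum.mono_neutral_right) (auto simp: wt_def)
  also have "\<dots> = (\<Sum>v\<in>Pow({..<n}-{i}). (-1)^card v)"
    by (rule sum.cong) (auto simp: wt_def)
  also have "\<dots> = 0" using altsum_Pow[OF _ ne] by simp
  finally show ?thesis .
qed

lemma ham_core:
  assumes n: "3 \<le> n" and i: "i < n" and h: "qham n F C"
  shows "finite C" "card (C \<inter> even_cross n i) = card (C \<inter> odd_cross n i)"
    "C \<inter> even_cross n i \<noteq> {}" "C \<inter> odd_cross n i \<noteq> {}" "C \<subseteq> qedges n - F"
proof -
  obtain vs where d: "distinct vs" and sv: "set vs = qverts n" and m3: "length vs \<ge> 3"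
    and C: "C = {{vs ! k, vs ! ((k + 1) mod length vs)} | k. k < length vs}" and CE: "C \<subseteq> qedges n - F"
    using h unfolding qham_def ham_cycle_def by blast
  define m where "m = length vs"
  define E where "E k = {vs ! k, vs ! ((k + 1) mod m)}" for k
  have CE': "C = E ` {..<m}" unfolding C E_def m_def by auto
  show fC: "finite C" unfolding CE' by simp
  show "C \<subseteq> qedges n - F" by (rule CE)
  have m: "3 \<le> m" using m3 m_def by simp
  have nth_inj: "\<And>a b. a < m \<Longrightarrow> b < m \<Longrightarrow> vs ! a = vs ! b \<longleftrightarrow> a = b"
    using d m_def nth_eq_iff_index_eq by blast
  have neq: "vs ! k \<noteq> vs ! ((k + 1) mod m)" if "k < m" for k
    using that m nth_inj[of k "(k+1) mod m"] mod_succ[of k m] by (auto split: if_splits)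
  have injE: "inj_on E {..<m}"
  proof (rule inj_onI)
    fix k j assume k: "k \<in> {..<m}" and j: "j \<in> {..<m}" and eq: "E k = E j"
    have km: "(k+1) mod m < m" "(j+1) mod m < m" using m by auto
    from eq have "(vs!k = vs!j \<and> vs!((k+1) mod m) = vs!((j+1) mod m)) \<or>
                  (vs!k = vs!((j+1) mod m) \<and> vs!((k+1) mod m) = vs!j)"
      unfolding E_def by (simp add: doubleton_eq_iff)
    then show "k = j"
    proof
      assume "vs!k = vs!j \<and> vs!((k+1) mod m) = vs!((j+1) mod m)"
      then show ?thesis using nth_inj k j by auto
    next
      assume "vs!k = vs!((j+1) mod m) \<and> vs!((k+1) mod m) = vs!j"
      then have a: "k = (j+1) mod m" and b: "(k+1) mod m = j" using nth_inj k j km by auto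
      have jm: "j < m" and km0: "k < m" using j k by auto
      have A: "k = (if j+1 = m then 0 else j+1)" using a mod_succ[OF jm] by simp
      have B: "j = (if k+1 = m then 0 else k+1)" using b mod_succ[OF km0] by simp
      have A': "(j+1 = m \<and> k = 0) \<or> (j+1 \<noteq> m \<and> k = j+1)" using A by (cases "j+1 = m") auto
      have B': "(k+1 = m \<and> j = 0) \<or> (k+1 \<noteq> m \<and> j = k+1)" using B by (cases "k+1 = m") auto
      show ?thesis using A' B' m by linarith
    qed
  qed
  have sumvs: "(\<Sum>k<m. wt i (vs!k)) = 0"
  proof -
    have "inj_on (nth vs) {..<m}" using nth_inj by (auto intro: inj_onI)
    moreover have "nth vs ` {..<m} = qverts n" using sv m_def by (auto simp: set_conv_nth)
    ultimately have "(\<Sum>v\<in>qverts n. wt i v) = (\<Sum>k<m. wt i (vs!k))"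
      by (metis sum.reindex comp_apply sum.cong)
    then show ?thesis using sum_qverts[of n i] n i by simp
  qed
  have shift: "(\<Sum>k<m. wt i (vs!((k+1) mod m))) = (\<Sum>k<m. wt i (vs!k))"
  proof -
    have inj: "inj_on (\<lambda>k. (k+1) mod m) {..<m}"
      by (rule inj_onI) (use mod_succ m in \<open>auto split: if_splits\<close>)
    have sub: "(\<lambda>k. (k+1) mod m) ` {..<m} \<subseteq> {..<m}" using m by auto
    have img: "(\<lambda>k. (k+1) mod m) ` {..<m} = {..<m}" using endo_inj_surj[OF _ sub inj] by simp
    have "(\<Sum>k<m. wt i (vs!k)) = (\<Sum>k\<in>(\<lambda>k. (k+1) mod m) ` {..<m}. wt i (vs!k))" using img by simp
    also have "\<dots> = (\<Sum>k<m. wt i (vs!((k+1) mod m)))" using sum.reindex[OF inj] by simp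
    finally show ?thesis by simp
  qed
  have "(\<Sum>e\<in>C. sum (wt i) e) = (\<Sum>k<m. sum (wt i) (E k))" unfolding CE' using sum.reindex[OF injE] by simp
  also have "\<dots> = (\<Sum>k<m. wt i (vs!k) + wt i (vs!((k+1) mod m)))"
    by (rule sum.cong) (use neq in \<open>auto simp: E_def\<close>)
  also have "\<dots> = 0" using sumvs shift by (simp add: sum.distrib)
  finally have s0: "(\<Sum>e\<in>C. sum (wt i) e) = 0" .
  have "(\<Sum>e\<in>C. sum (wt i) e) = (\<Sum>e\<in>C. of_bool (e \<in> even_cross n i) - of_bool (e \<in> odd_cross n i))"
    by (rule sum.cong) (use CE h_edge i in auto)
  also have "\<dots> = int (card (C \<inter> even_cross n i)) - int (card (C \<inter> odd_cross n i))"
    using fC by (simp add: sum_subtractf sum_of_bool_eq Int_def)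
  finally show ceq: "card (C \<inter> even_cross n i) = card (C \<inter> odd_cross n i)" using s0 by simp
  define P where "P k = (i \<in> vs ! k)" for k
  have "{i} \<in> qverts n" "{} \<in> qverts n" using i by (auto simp: qverts_def)
  then obtain a b where a: "a < m" "P a" and b: "b < m" "\<not> P b"
    using sv m_def unfolding P_def by (metis in_set_conv_nth insertI1 empty_iff)
  have "\<exists>k<m. P k \<noteq> P ((k+1) mod m)"
  proof (rule ccontr)
    assume "\<not> ?thesis"
    then have st: "\<And>k. k < m \<Longrightarrow> P k = P ((k+1) mod m)" by blast
    have "k < m \<Longrightarrow> P k = P 0" for k
    proof (induction k)
      case (Suc k)
      then show ?case using st[of k] mod_succ[of k m] by auto
    qed simp
    then show False using a b by blast
  qed
  then obtain k where k: "k < m" "P k \<noteq> P ((k+1) mod m)" by blast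
  have Ek: "E k \<in> C" unfolding CE' using k by simp
  have "E k \<in> even_cross n i \<union> odd_cross n i"
  proof (cases "P k")
    case True
    then show ?thesis using cross_edge[of "E k" n "vs!k" "vs!((k+1) mod m)" i] Ek CE k
      unfolding P_def E_def by auto
  next
    case False
    then show ?thesis using cross_edge[of "E k" n "vs!((k+1) mod m)" "vs!k" i] Ek CE k
      unfolding P_def E_def by auto
  qed
  then have "C \<inter> even_cross n i \<noteq> {} \<or> C \<inter> odd_cross n i \<noteq> {}" using Ek by blast
  then show "C \<inter> even_cross n i \<noteq> {}" "C \<inter> odd_cross n i \<noteq> {}"
    using ceq fC by (metis card_0_eq finite_Int)+
qed



lemma abstract:
  fixes X Y F B :: "'a set" and H :: "'a set \<Rightarrow> bool"
  assumes fX: "finite X" and cX: "card X = N" and BF: "B \<inter> F = {}"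
    and core: "\<And>C. H C \<Longrightarrow> finite C \<and> card (C \<inter> X) = card (C \<inter> Y) \<and> C \<inter> X \<noteq> {} \<and> C \<inter> F = {} \<and> B \<subseteq> C"
  shows "(card (F \<inter> X) = N \<longrightarrow> \<not> (\<exists>C. H C))
   \<and> (card (F \<inter> X) + card (B \<inter> Y) > N \<longrightarrow> \<not> (\<exists>C. H C))
   \<and> (card (F \<inter> X) + card (B \<inter> Y) = N \<longrightarrow> (\<forall>C. H C \<longrightarrow> X - F \<subseteq> C) \<and> (\<forall>e\<in>Y. (\<exists>C. H C \<and> e \<in> C) \<longrightarrow> e \<in> B))
   \<and> (card (F \<inter> X) = N - 1 \<longrightarrow> N \<ge> 1 \<longrightarrow> (\<exists>!e. e \<in> X - F) \<and> (\<forall>e\<in>X - F. \<forall>C. H C \<longrightarrow> e \<in> C))"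
proof -
  have cXF: "card (X - F) = N - card (F \<inter> X)"
    using card_Diff_subset_Int[of X F] fX cX by (simp add: Int_commute)
  have fle: "card (F \<inter> X) \<le> N" using cX fX by (metis card_mono inf_le2)
  have key: "1 \<le> card (C \<inter> X) \<and> card (C \<inter> X) \<le> N - card (F \<inter> X) \<and> card (B \<inter> Y) \<le> card (C \<inter> X)
     \<and> C \<inter> X \<subseteq> X - F \<and> B \<inter> Y \<subseteq> C \<inter> Y \<and> finite C" if "H C" for C
  proof -
    have c: "finite C" "card (C \<inter> X) = card (C \<inter> Y)" "C \<inter> X \<noteq> {}" "C \<inter> F = {}" "B \<subseteq> C" using core[OF that] by auto
    have s1: "C \<inter> X \<subseteq> X - F" using c by blast
    have s2: "B \<inter> Y \<subseteq> C \<inter> Y" using c by blast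
    have "card (C \<inter> X) \<le> card (X - F)" using s1 fX by (simp add: card_mono)
    moreover have "card (B \<inter> Y) \<le> card (C \<inter> Y)" using s2 c(1) by (simp add: card_mono)
    moreover have "1 \<le> card (C \<inter> X)" using c(1,3) by (metis One_nat_def Suc_leI card_gt_0_iff finite_Int)
    ultimately show ?thesis using c s1 s2 cXF by simp
  qed
  show ?thesis
  proof (intro conjI impI allI ballI)
    assume "card (F \<inter> X) = N" then show "\<not> (\<exists>C. H C)" using key by fastforce
  next
    assume "card (F \<inter> X) + card (B \<inter> Y) > N" then show "\<not> (\<exists>C. H C)" using key by fastforce
  next
    fix C assume eq: "card (F \<inter> X) + card (B \<inter> Y) = N" and HC: "H C"
    note k = key[OF HC]
    have "card (C \<inter> X) = card (X - F)" using k eq cXF by (elim conjE) linarith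
    then have "C \<inter> X = X - F" using k fX by (metis card_subset_eq finite_Diff)
    then show "X - F \<subseteq> C" by blast
  next
    fix e assume eq: "card (F \<inter> X) + card (B \<inter> Y) = N" and eY: "e \<in> Y" and ex: "\<exists>C. H C \<and> e \<in> C"
    then obtain C where HC: "H C" "e \<in> C" by blast
    note k = key[OF HC(1)]
    have cc: "card (C \<inter> X) = card (C \<inter> Y)" using core[OF HC(1)] by simp
    have "card (B \<inter> Y) = card (C \<inter> Y)" using k eq cc by (elim conjE) linarith
    then have "B \<inter> Y = C \<inter> Y" using k by (metis card_subset_eq finite_Int)
    then show "e \<in> B" using eY HC by blast
  next
    assume a: "card (F \<inter> X) = N - 1" "N \<ge> 1"
    then have "card (X - F) = 1" using cXF by simp
    then show "\<exists>!e. e \<in> X - F" by (metis card_1_singletonE singleton_iff)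
  next
    fix e C assume a: "card (F \<inter> X) = N - 1" "N \<ge> 1" and e: "e \<in> X - F" and HC: "H C"
    then have "card (X - F) = 1" using cXF by simp
    then obtain x where x: "X - F = {x}" by (metis card_1_singletonE)
    note k = key[OF HC]
    then have "C \<inter> X = {x}" using x by (metis card_0_eq not_one_le_zero subset_singletonD finite_Int finite.emptyI)
    then show "e \<in> C" using e x by blast
  qed
qed

theorem lemma6:
  fixes n i :: nat and F B :: "nat set set set"
  assumes n3: "n \<ge> 3"
    and F: "F \<subseteq> qedges n"
    and B: "B \<subseteq> qedges n - F"
    and Bforced: "\<forall>C. qham n F C \<longrightarrow> B \<subseteq> C"
    and i: "i < n"
  defines "fe \<equiv> card (F \<inter> even_cross n i)"
    and "fo \<equiv> card (F \<inter> odd_cross n i)"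
    and "be \<equiv> card (B \<inter> even_cross n i)"
    and "bo \<equiv> card (B \<inter> odd_cross n i)"
  shows
    "((fe = 2^(n-2) \<or> fo = 2^(n-2)) \<longrightarrow> \<not> (\<exists>C. qham n F C))
     \<and> ((fe + bo > 2^(n-2) \<or> fo + be > 2^(n-2)) \<longrightarrow> \<not> (\<exists>C. qham n F C))
     \<and> (fe + bo = 2^(n-2) \<longrightarrow>
          (\<forall>C. qham n F C \<longrightarrow> even_cross n i - F \<subseteq> C)
          \<and> (\<forall>e \<in> odd_cross n i. (\<exists>C. qham n F C \<and> e \<in> C) \<longrightarrow> e \<in> B))
     \<and> (fo + be = 2^(n-2) \<longrightarrow>
          (\<forall>C. qham n F C \<longrightarrow> odd_cross n i - F \<subseteq> C)
          \<and> (\<forall>e \<in> even_cross n i. (\<exists>C. qham n F C \<and> e \<in> C) \<longrightarrow> e \<in> B))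
     \<and> (fe = 2^(n-2) - 1 \<longrightarrow>
          (\<exists>!e. e \<in> even_cross n i - F) \<and>
          (\<forall>e \<in> even_cross n i - F. \<forall>C. qham n F C \<longrightarrow> e \<in> C))
     \<and> (fo = 2^(n-2) - 1 \<longrightarrow>
          (\<exists>!e. e \<in> odd_cross n i - F) \<and>
          (\<forall>e \<in> odd_cross n i - F. \<forall>C. qham n F C \<longrightarrow> e \<in> C))"
  proof -
  let ?H = "qham n F"
  let ?N = "2^(n-2) :: nat"
  have BF: "B \<inter> F = {}" using B by blast
  have core1: "finite C \<and> card (C \<inter> even_cross n i) = card (C \<inter> odd_cross n i) \<and> C \<inter> even_cross n i \<noteq> {} \<and> C \<inter> F = {} \<and> B \<subseteq> C"
    if "?H C" for C using ham_core[OF n3 i that] Bforced that by blast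
  have core2: "finite C \<and> card (C \<inter> odd_cross n i) = card (C \<inter> even_cross n i) \<and> C \<inter> odd_cross n i \<noteq> {} \<and> C \<inter> F = {} \<and> B \<subseteq> C"
    if "?H C" for C using ham_core[OF n3 i that] Bforced that by auto
  have n2: "2 \<le> n" using n3 by simp
  note A1 = abstract[OF card_ec(2)[OF n2 i] card_ec(1)[OF n2 i] BF core1]
  note A2 = abstract[OF card_oc(2)[OF n2 i] card_oc(1)[OF n2 i] BF core2]
  have N1: "?N \<ge> 1" by simp
  note e1 = A1[THEN conjunct1] and e2 = A1[THEN conjunct2, THEN conjunct1]
    and e3 = A1[THEN conjunct2, THEN conjunct2, THEN conjunct1]
    and e4 = A1[THEN conjunct2, THEN conjunct2, THEN conjunct2]
  note o1 = A2[THEN conjunct1] and o2 = A2[THEN conjunct2, THEN conjunct1]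
    and o3 = A2[THEN conjunct2, THEN conjunct2, THEN conjunct1]
    and o4 = A2[THEN conjunct2, THEN conjunct2, THEN conjunct2]
  show ?thesis unfolding fe_def fo_def be_def bo_def
  proof (intro conjI)
    show "card (F \<inter> even_cross n i) = ?N \<or> card (F \<inter> odd_cross n i) = ?N \<longrightarrow> \<not> (\<exists>C. ?H C)"
      using e1 o1 by blast
    show "?N < card (F \<inter> even_cross n i) + card (B \<inter> odd_cross n i) \<or> ?N < card (F \<inter> odd_cross n i) + card (B \<inter> even_cross n i) \<longrightarrow> \<not> (\<exists>C. ?H C)"
      using e2 o2 by blast
    show "card (F \<inter> even_cross n i) + card (B \<inter> odd_cross n i) = ?N \<longrightarrow>
          (\<forall>C. ?H C \<longrightarrow> even_cross n i - F \<subseteq> C) \<and> (\<forall>e\<in>odd_cross n i. (\<exists>C. ?H C \<and> e \<in> C) \<longrightarrow> e \<in> B)"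
      by (rule e3)
    show "card (F \<inter> odd_cross n i) + card (B \<inter> even_cross n i) = ?N \<longrightarrow>
          (\<forall>C. ?H C \<longrightarrow> odd_cross n i - F \<subseteq> C) \<and> (\<forall>e\<in>even_cross n i. (\<exists>C. ?H C \<and> e \<in> C) \<longrightarrow> e \<in> B)"
      by (rule o3)
    show "card (F \<inter> even_cross n i) = ?N - 1 \<longrightarrow>
          (\<exists>!e. e \<in> even_cross n i - F) \<and> (\<forall>e\<in>even_cross n i - F. \<forall>C. ?H C \<longrightarrow> e \<in> C)"
    proof
      assume "card (F \<inter> even_cross n i) = ?N - 1"
      from mp[OF mp[OF e4 this] N1] show "(\<exists>!e. e \<in> even_cross n i - F) \<and> (\<forall>e\<in>even_cross n i - F. \<forall>C. ?H C \<longrightarrow> e \<in> C)" .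
    qed
    show "card (F \<inter> odd_cross n i) = ?N - 1 \<longrightarrow>
          (\<exists>!e. e \<in> odd_cross n i - F) \<and> (\<forall>e\<in>odd_cross n i - F. \<forall>C. ?H C \<longrightarrow> e \<in> C)"
    proof
      assume "card (F \<inter> odd_cross n i) = ?N - 1"
      from mp[OF mp[OF o4 this] N1] show "(\<exists>!e. e \<in> odd_cross n i - F) \<and> (\<forall>e\<in>odd_cross n i - F. \<forall>C. ?H C \<longrightarrow> e \<in> C)" .
    qed
  qed
qed

end
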